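(* Let $k,l,m$ be positive integers. Suppose $A(x)=\sum_{i=0}^{k-1}a_ix^i$ is a monic polynomial of degree $k-1$, $B$ is a polynomial, and $c\in\mathbb C$, $c\ne0$, are such that $$(x-1)^l A(x)^m-x^kB(x)=c.$$ Then $A$ satisfies the differential equation $$m\,A'(x)\,(x-1)+l\,A(x)=\big(m(k-1)+l\big)\,x^{k-1};$$ consequently its coefficients are given by $a_{k-1}=1$ and $a_i=\dfrac{m(i+1)}{mi+l}\,a_{i+1}$ for $0\le i\le k-2$. Moreover $c=(-1)^l a_0^m$.
   Context: This is the normalization of the Shabat polynomial/Davenport–Zannier pair $P=(x-1)^lA^m$, $Q=x^kB$ for an ordinary tree of diameter 4 (series $F$). *)

theory Defs
  imports "HOL-Computational_Algebra.Polynomial"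
begin

end

theory Submission
  imports Defs
begin

lemma coeffD:
  fixes A :: "complex poly"
  shows "coeff (smult (of_nat m) (pderiv A * [:-1, 1:]) + smult (of_nat l) A) i
     = (of_nat (m*i+l)) * coeff A i - of_nat (m*(i+1)) * coeff A (i+1)"
proof -
  have e: "pderiv A * [:-1, 1:] = smult (-1) (pderiv A) + pCons 0 (pderiv A)"
    by (simp add: mult.commute)
  show ?thesis
  proof (cases i)
    case 0
    then show ?thesis by (simp add: e coeff_pderiv algebra_simps)
  next
    case (Suc j)
    then show ?thesis by (simp add: e coeff_pderiv algebra_simps)
  qed
qed

theorem mainTheorem7:
  fixes k l m :: nat and A B :: "complex poly" and c :: complex
  assumes "k > 0" and "l > 0" and "m > 0"
    and "degree A = k - 1" and "lead_coeff A = 1"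
    and "c \<noteq> 0"
    and "[:-1, 1:] ^ l * A ^ m - monom 1 k * B = [:c:]"
  shows "smult (of_nat m) (pderiv A * [:-1, 1:]) + smult (of_nat l) A
           = monom (of_nat (m * (k - 1) + l)) (k - 1)
    \<and> coeff A (k - 1) = 1
    \<and> (\<forall>i. i + 2 \<le> k \<longrightarrow>
           coeff A i = (of_nat (m * (i + 1)) / of_nat (m * i + l)) * coeff A (i + 1))
    \<and> c = (-1) ^ l * (coeff A 0) ^ m"
proof -
  define L :: "complex poly" where "L = [:-1, 1:]"
  define D where "D = smult (of_nat m) (pderiv A * [:-1, 1:]) + smult (of_nat l) A"
  have eq: "L ^ l * A ^ m = monom 1 k * B + [:c:]" using assms(7) unfolding L_def
    by (simp add: algebra_simps)
  have p0: "poly (L ^ l * A ^ m) 0 = c" unfolding eq using assms(1)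
    by (simp add: poly_monom)
  hence "c = (-1) ^ l * (poly A 0) ^ m" by (simp add: L_def del: poly_0_coeff_0)
  hence cval: "c = (-1) ^ l * (coeff A 0) ^ m" by (simp add: poly_0_coeff_0)
  have A0: "poly A 0 \<noteq> 0" using cval assms(3,6) by (auto simp add: poly_0_coeff_0)
  have "pderiv (L ^ l * A ^ m) = pderiv (monom 1 k * B)" unfolding eq
    by (simp add: pderiv_add pderiv_pCons)
  moreover have "pderiv (L ^ l * A ^ m) = L^(l-1) * A^(m-1) * D"
  proof -
    have Ll: "L ^ l = L^(l-1) * L" using assms(2)
      by (metis Suc_diff_1 power_Suc2)
    have Am: "A ^ m = A^(m-1) * A" using assms(3)
      by (metis Suc_diff_1 power_Suc2)
    have pL: "pderiv L = 1" by (simp add: L_def pderiv_pCons)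
    show ?thesis unfolding D_def pderiv_mult pderiv_power pL
      unfolding Ll Am L_def[symmetric] by (simp add: algebra_simps)
  qed
  moreover have "pderiv (monom 1 k * B) = monom 1 (k-1) * (smult (of_nat k) B + monom 1 1 * pderiv B)"
  proof -
    have "monom (1::complex) k = monom 1 (k-1) * monom 1 1" using assms(1)
      by (simp add: mult_monom)
    then show ?thesis unfolding pderiv_mult pderiv_monom
      by (simp add: algebra_simps smult_monom flip: mult_smult_right)
  qed
  ultimately have dv: "monom 1 (k-1) dvd L^(l-1) * A^(m-1) * D" by (metis dvd_triv_left)
  have dvD: "monom 1 (k-1) dvd D"
  proof (cases "D = 0")
    case True then show ?thesis by simp
  next
    case False
    have L0: "poly L 0 \<noteq> 0" by (simp add: L_def)
    have Q0: "poly (L^(l-1) * A^(m-1)) 0 \<noteq> 0" using L0 A0 by simp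
    hence Qn: "L^(l-1) * A^(m-1) \<noteq> 0" by auto
    have oQ: "order 0 (L^(l-1) * A^(m-1)) = 0" using Q0 order_root by blast
    have nz: "L^(l-1) * A^(m-1) * D \<noteq> 0" using Qn False by simp
    have "k - 1 \<le> order 0 (L^(l-1) * A^(m-1) * D)" using dv nz monom_1_dvd_iff by blast
    also have "\<dots> = order 0 D" using order_mult[OF nz, of 0] oQ by simp
    finally show ?thesis using monom_1_dvd_iff False by blast
  qed
  have ak: "coeff A k = 0" using assms(4) assms(1) by (simp add: coeff_eq_0)
  have ak1: "coeff A (k-1) = 1" using assms(4,5) by simp
  have Dlow: "coeff D i = 0" if "i < k - 1" for i
  proof -
    obtain q where "D = monom 1 (k-1) * q" using dvD by blast
    then show ?thesis using that by (simp add: coeff_monom_mult)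
  qed
  have DE: "D = monom (of_nat (m * (k - 1) + l)) (k - 1)"
  proof (rule poly_eqI)
    fix i
    show "coeff D i = coeff (monom (of_nat (m * (k - 1) + l)) (k - 1)) i"
    proof (cases "i < k - 1")
      case True then show ?thesis using Dlow by (simp add: coeff_monom)
    next
      case False
      show ?thesis
      proof (cases "i = k - 1")
        case True
        then show ?thesis using ak ak1 assms(1) unfolding D_def coeffD by (simp add: coeff_monom)
      next
        case F2: False
        with False have "i > degree A" "i + 1 > degree A" using assms(4) by auto
        then show ?thesis using F2 unfolding D_def coeffD by (simp add: coeff_eq_0 coeff_monom)
      qed
    qed
  qed
  have rec: "\<forall>i. i + 2 \<le> k \<longrightarrow>
           coeff A i = (of_nat (m * (i + 1)) / of_nat (m * i + l)) * coeff A (i + 1)"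
  proof (intro allI impI)
    fix i assume "i + 2 \<le> k"
    hence "coeff D i = 0" using Dlow by simp
    hence "(of_nat (m*i+l)) * coeff A i = of_nat (m*(i+1)) * coeff A (i+1)"
      unfolding D_def coeffD by simp
    moreover have "(of_nat (m*i+l) :: complex) \<noteq> 0" using assms(2) of_nat_eq_0_iff by (metis add_is_0 not_gr0)
    ultimately show "coeff A i = (of_nat (m * (i + 1)) / of_nat (m * i + l)) * coeff A (i + 1)"
      by (simp add: field_simps)
  qed
  show ?thesis using DE ak1 rec cval unfolding D_def by simp
qed

end
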